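(* Fix $n\in\mathbb{N}$. Let $S=(S_t)_{t\ge0}$ be the subordinator with Laplace exponent $\Phi$, and let $\varepsilon_1,\dots,\varepsilon_n$ be i.i.d. standard exponential random variables independent of $S$, with order statistics $\varepsilon_{n:n}<\dots<\varepsilon_{n:1}$; set $\varepsilon_{n:n+1}:=0$ and $\varepsilon_{n:0}:=+\infty$. Let $1\le k\le m\le n$. Then, for $t\ge0$, conditionally given $S_t=s$ with $s\in(\varepsilon_{n:m+1},\varepsilon_{n:m})$, the subordinator jumps over the level $\varepsilon_{n:m}$ at probability rate $\Phi(m)$. Moreover, the probability rate of a jump of $S$ at which $S$ jumps from its current position to a point of the interval $(\varepsilon_{n:m-k+1},\varepsilon_{n:m-k})$ (i.e. passes exactly the $k$ levels $\varepsilon_{n:m},\dots,\varepsilon_{n:m-k+1}$) is $\varphi_{m,k}$.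
   Context: Let $\nu$ be a measure on $(0,1)$ (no mass at $1$) satisfying $\int_0^1 x\,\nu(dx)<\infty$. For $1\le k\le m$ put $\lambda_{m,k}=\int_0^1 x^k(1-x)^{m-k}\nu(dx)$ and $\varphi_{m,k}=\binom{m}{k}\lambda_{m,k}$. Let $\Phi(z)=\int_0^1(1-(1-x)^z)\nu(dx)$, $z\ge0$, and let $S$ be the pure-jump subordinator with $\mathbb{E}e^{-zS_t}=e^{-t\Phi(z)}$ (its Lévy measure is the image of $\nu$ under $x\mapsto -\log(1-x)$). *)

theory Defs
  imports "HOL-Probability.Probability"
begin

definition Phi :: "real measure \<Rightarrow> real \<Rightarrow> real" where
  "Phi \<nu> z = (\<integral>x. (1 - (1 - x) powr z) \<partial>\<nu>)"

definition lam :: "real measure \<Rightarrow> nat \<Rightarrow> nat \<Rightarrow> real" where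
  "lam \<nu> m k = (\<integral>x. x ^ k * (1 - x) ^ (m - k) \<partial>\<nu>)"

definition varphi :: "real measure \<Rightarrow> nat \<Rightarrow> nat \<Rightarrow> real" where
  "varphi \<nu> m k = real (m choose k) * lam \<nu> m k"

definition levy_measure :: "real measure \<Rightarrow> real measure" where
  "levy_measure \<nu> = distr \<nu> borel (\<lambda>x. - ln (1 - x))"

definition exp_sample :: "nat \<Rightarrow> (nat \<Rightarrow> real) measure" where
  "exp_sample n = PiM {..<n} (\<lambda>_. density lborel (exponential_density 1))"

text \<open>Order statistics: ord_stat n w j = eps_{n:j}, the j-th largest value,
  with eps_{n:0} = +infinity and eps_{n:n+1} = 0.\<close>
definition ord_stat :: "nat \<Rightarrow> (nat \<Rightarrow> real) \<Rightarrow> nat \<Rightarrow> ereal" where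
  "ord_stat n w j = (if j = 0 then \<infinity> else if j > n then 0
      else ereal (rev (sort (map w [0..<n])) ! (j - 1)))"

definition cond_prob :: "'a measure \<Rightarrow> 'a set \<Rightarrow> 'a set \<Rightarrow> real" where
  "cond_prob M A B = measure M (A \<inter> B) / measure M B"

definition cond_event :: "nat \<Rightarrow> nat \<Rightarrow> real \<Rightarrow> (nat \<Rightarrow> real) set" where
  "cond_event n m s = {w \<in> space (exp_sample n).
      ord_stat n w (Suc m) < ereal s \<and> ereal s < ord_stat n w m}"

text \<open>Probability rate of a jump of S from the current position s with property P:
  each jump size y occurs at rate levy_measure nu (dy); the rate is the integral over
  the Levy measure of the conditional probability (given the conditioning event)
  that a jump of size y from s has property P.\<close>
definition jump_rate :: "real measure \<Rightarrow> nat \<Rightarrow> nat \<Rightarrow> real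
      \<Rightarrow> ((nat \<Rightarrow> real) \<Rightarrow> real \<Rightarrow> bool) \<Rightarrow> ennreal" where
  "jump_rate \<nu> n m s P = (\<integral>\<^sup>+ y. ennreal (cond_prob (exp_sample n)
      {w \<in> space (exp_sample n). P w y} (cond_event n m s)) \<partial>(levy_measure \<nu>))"

end

theory Submission
  imports Defs
begin


abbreviation "EE \<equiv> density lborel (\<lambda>x. ennreal (exponential_density 1 x))"

lemma EE_prob: "prob_space EE"
  by (rule prob_space_exponential_density) simp

lemma EE_distr: "distributed EE lborel (\<lambda>x. x) (exponential_density 1)"
  unfolding distributed_def by (auto simp: distr_id2)

lemma EE_gt: assumes "0 \<le> a" shows "measure EE {a<..} = exp (- a)"
proof -
  interpret prob_space EE by (rule EE_prob)
  have "\<P>(x in EE. a < x) = exp (- a * 1)"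
    by (rule exponential_distributedD_gt[OF EE_distr assms]) simp
  moreover have "{x \<in> space EE. a < x} = {a<..}" by auto
  ultimately show ?thesis by simp
qed

lemma EE_le: assumes "0 \<le> a" shows "measure EE {..a} = 1 - exp (- a)"
proof -
  interpret prob_space EE by (rule EE_prob)
  have "\<P>(x in EE. x \<le> a) = 1 - exp (- a * 1)"
    by (rule exponential_distributedD_le[OF EE_distr assms]) simp
  moreover have "{x \<in> space EE. x \<le> a} = {..a}" by auto
  ultimately show ?thesis by simp
qed

lemma EE_single: "measure EE {a} = 0"
proof -
  have "AE x in lborel. x \<in> {a} \<longrightarrow> ennreal (exponential_density 1 x) = 0"
    using AE_lborel_singleton[of a] by (rule eventually_mono) auto
  then have "{a} \<in> null_sets EE"
    by (subst null_sets_density_iff) auto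
  then show ?thesis by (simp add: measure_def null_setsD1)
qed

lemma EE_ge: assumes "0 \<le> a" shows "measure EE {a..} = exp (- a)"
proof -
  interpret prob_space EE by (rule EE_prob)
  have "{a..} = {a<..} \<union> {a}" by auto
  moreover have "measure EE ({a<..} \<union> {a}) = measure EE {a<..} + measure EE {a}"
    by (rule finite_measure_Union) auto
  ultimately have "measure EE {a..} = measure EE {a<..} + measure EE {a}" by simp
  then show ?thesis using EE_gt[OF assms] EE_single by simp
qed

lemma EE_lt: assumes "0 \<le> a" shows "measure EE {..<a} = 1 - exp (- a)"
proof -
  interpret prob_space EE by (rule EE_prob)
  have "{..a} = {..<a} \<union> {a}" by auto
  moreover have "measure EE ({..<a} \<union> {a}) = measure EE {..<a} + measure EE {a}"
    by (rule finite_measure_Union) auto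
  ultimately have "measure EE {..a} = measure EE {..<a} + measure EE {a}" by simp
  then show ?thesis using EE_le[OF assms] EE_single by simp
qed

lemma EE_between: assumes "0 \<le> a" "a < b" shows "measure EE {a<..<b} = exp (- a) - exp (- b)"
proof -
  interpret prob_space EE by (rule EE_prob)
  have "{a<..} = {a<..<b} \<union> {b..}" using assms by auto
  moreover have "measure EE ({a<..<b} \<union> {b..}) = measure EE {a<..<b} + measure EE {b..}"
    by (rule finite_measure_Union) auto
  ultimately have "measure EE {a<..} = measure EE {a<..<b} + measure EE {b..}" by simp
  then show ?thesis using EE_gt[OF assms(1)] EE_ge[of b] assms by simp
qed




lemma sorted_idx:
  assumes "sorted ys" "\<And>x y. x \<le> y \<Longrightarrow> P x \<Longrightarrow> P y" "i < length ys"
  shows "P (ys ! i) \<longleftrightarrow> length ys - length (filter P ys) \<le> i"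
  using assms(1,3)
proof (induction ys arbitrary: i)
  case Nil then show ?case by simp
next
  case (Cons x ys)
  have le: "length (filter P ys) \<le> length ys" by simp
  show ?case
  proof (cases "P x")
    case True
    then have "\<forall>z\<in>set (x#ys). P z" using Cons.prems(1) assms(2) by auto
    then have "filter P (x#ys) = x#ys" by simp
    moreover have "P ((x#ys) ! i)" using \<open>\<forall>z\<in>set (x#ys). P z\<close> Cons.prems(2) nth_mem by blast
    ultimately show ?thesis by simp
  next
    case False
    show ?thesis
    proof (cases i)
      case 0 then show ?thesis using False by simp (use le in linarith)
    next
      case (Suc i')
      have "P (ys ! i') \<longleftrightarrow> length ys - length (filter P ys) \<le> i'"
        using Cons.IH[of i'] Cons.prems Suc by simp
      then show ?thesis using False Suc le by auto
    qed
  qed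
qed

lemma len_filter_sort: "length (filter P (sort xs)) = length (filter P xs)"
proof -
  have "length (filter P (sort xs)) = size (filter_mset P (mset (sort xs)))"
    by (metis mset_filter size_mset)
  also have "\<dots> = size (filter_mset P (mset xs))" by simp
  also have "\<dots> = length (filter P xs)" by (metis mset_filter size_mset)
  finally show ?thesis .
qed

lemma len_filter_map: "length (filter P (map w [0..<n])) = card {i. i < n \<and> P (w i)}"
  unfolding length_filter_conv_card by (rule arg_cong[where f=card]) auto

lemma ord_stat_val:
  assumes "1 \<le> j" "j \<le> n"
  shows "ord_stat n w j = ereal (sort (map w [0..<n]) ! (n - j))"
proof -
  have "rev (sort (map w [0..<n])) ! (j - 1) = sort (map w [0..<n]) ! (n - Suc (j - 1))"
    using assms by (subst rev_nth) auto
  then show ?thesis using assms by (simp add: ord_stat_def)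
qed

lemma ord_stat_gt:
  assumes "1 \<le> j" "j \<le> n"
  shows "ereal a < ord_stat n w j \<longleftrightarrow> j \<le> card {i. i < n \<and> a < w i}"
proof -
  let ?ys = "sort (map w [0..<n])"
  have c: "card {i. i < n \<and> a < w i} \<le> n"
    by (rule order_trans[OF card_mono[of "{..<n}"]]) auto
  have "a < ?ys ! (n - j) \<longleftrightarrow> length ?ys - length (filter (\<lambda>x. a < x) ?ys) \<le> n - j"
    by (rule sorted_idx) (use assms in auto)
  also have "\<dots> \<longleftrightarrow> n - card {i. i < n \<and> a < w i} \<le> n - j"
    using len_filter_sort[of "\<lambda>x. a < x"] len_filter_map[of "\<lambda>x. a < x" w n] by simp
  also have "\<dots> \<longleftrightarrow> j \<le> card {i. i < n \<and> a < w i}" using c assms by linarith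
  finally show ?thesis using ord_stat_val[OF assms] by simp
qed

lemma ord_stat_lt:
  assumes "1 \<le> j" "j \<le> n"
  shows "ord_stat n w j < ereal a \<longleftrightarrow> card {i. i < n \<and> a \<le> w i} < j"
proof -
  let ?ys = "sort (map w [0..<n])"
  have c: "card {i. i < n \<and> a \<le> w i} \<le> n"
    by (rule order_trans[OF card_mono[of "{..<n}"]]) auto
  have "a \<le> ?ys ! (n - j) \<longleftrightarrow> length ?ys - length (filter (\<lambda>x. a \<le> x) ?ys) \<le> n - j"
    by (rule sorted_idx) (use assms in auto)
  also have "\<dots> \<longleftrightarrow> n - card {i. i < n \<and> a \<le> w i} \<le> n - j"
    using len_filter_sort[of "\<lambda>x. a \<le> x"] len_filter_map[of "\<lambda>x. a \<le> x" w n] by simp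
  also have "\<dots> \<longleftrightarrow> j \<le> card {i. i < n \<and> a \<le> w i}" using c assms by linarith
  finally show ?thesis using ord_stat_val[OF assms] by (auto simp: not_le[symmetric])
qed




lemma M_eq: "exp_sample n = PiM {..<n} (\<lambda>_. EE)"
  by (simp add: exp_sample_def)

lemma FPS: "finite_product_prob_space (\<lambda>_. EE) {..<(n::nat)}"
  by (auto simp: finite_product_prob_space_def finite_product_sigma_finite_def product_prob_space_def
      product_sigma_finite_def product_prob_space_axioms_def finite_product_sigma_finite_axioms_def
      EE_prob prob_space_imp_sigma_finite)

lemma M_prob: "prob_space (exp_sample n)"
proof -
  interpret finite_product_prob_space "\<lambda>_. EE" "{..<n}" by (rule FPS)
  show ?thesis unfolding M_eq by (rule prob_space_axioms)
qed

lemma M_space: "space (exp_sample n) = PiE {..<n} (\<lambda>_. UNIV)"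
  by (simp add: M_eq space_PiM)

lemma box_sets: "(\<And>i. i < n \<Longrightarrow> F i \<in> sets borel) \<Longrightarrow> PiE {..<n} F \<in> sets (exp_sample n)"
  unfolding M_eq by (rule sets_PiM_I_finite) auto

lemma box_meas: "(\<And>i. i < n \<Longrightarrow> F i \<in> sets borel) \<Longrightarrow>
    measure (exp_sample n) (PiE {..<n} F) = (\<Prod>i<n. measure EE (F i))"
proof -
  assume F: "\<And>i. i < n \<Longrightarrow> F i \<in> sets borel"
  interpret finite_product_prob_space "\<lambda>_. EE" "{..<n}" by (rule FPS)
  show ?thesis unfolding M_eq by (rule finite_measure_PiM_emb) (use F in auto)
qed

lemma prod_if2:
  assumes "finite A" "I \<subseteq> A"
  shows "(\<Prod>i\<in>A. if i \<in> I then a else b) = a ^ card I * (b::real) ^ (card A - card I)"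
proof -
  have "(\<Prod>i\<in>A. if i \<in> I then a else b) = (\<Prod>i\<in>A \<inter> {x. x \<in> I}. a) * (\<Prod>i\<in>A \<inter> - {x. x \<in> I}. b)"
    by (rule prod.If_cases) (rule assms)
  also have "A \<inter> {x. x \<in> I} = I" using assms by auto
  also have "A \<inter> - {x. x \<in> I} = A - I" by auto
  finally have "(\<Prod>i\<in>A. if i \<in> I then a else b) = a ^ card I * b ^ card (A - I)" by simp
  moreover have "card (A - I) = card A - card I" using assms by (simp add: card_Diff_subset finite_subset)
  ultimately show ?thesis by simp
qed

lemma prod_if3:
  assumes "finite A" "I \<subseteq> A" "J \<subseteq> I"
  shows "(\<Prod>i\<in>A. if i \<in> J then a else if i \<in> I then b else c) =
     a ^ card J * b ^ (card I - card J) * (c::real) ^ (card A - card I)"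
proof -
  have fI1: "finite I" using finite_subset[OF assms(2,1)] .
  have fI2: "finite J" using finite_subset[OF assms(3) fI1] .
  note fI = fI1 fI2
  have "(\<Prod>i\<in>A. if i \<in> J then a else if i \<in> I then b else c) =
      (\<Prod>i\<in>A \<inter> {x. x \<in> J}. a) * (\<Prod>i\<in>A \<inter> - {x. x \<in> J}. if i \<in> I then b else c)"
    by (rule prod.If_cases) (rule assms)
  also have "A \<inter> {x. x \<in> J} = J" using assms by auto
  also have "A \<inter> - {x. x \<in> J} = A - J" by auto
  also have "(\<Prod>i\<in>A - J. if i \<in> I then b else c) = (\<Prod>i\<in>A - J. if i \<in> I - J then b else c)"
    by (rule prod.cong) auto
  also have "\<dots> = b ^ card (I - J) * c ^ (card (A - J) - card (I - J))"
    by (rule prod_if2) (use assms in auto)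
  finally have e: "(\<Prod>i\<in>A. if i \<in> J then a else if i \<in> I then b else c) =
      a ^ card J * (b ^ card (I - J) * c ^ (card (A - J) - card (I - J)))" by simp
  have c1: "card (I - J) = card I - card J" using assms fI by (simp add: card_Diff_subset)
  have c2: "card (A - J) = card A - card J" using assms fI by (simp add: card_Diff_subset)
  have c3: "card A - card J - (card I - card J) = card A - card I"
    using card_mono[OF \<open>finite A\<close> \<open>I \<subseteq> A\<close>] card_mono[OF fI(1) \<open>J \<subseteq> I\<close>] by linarith
  show ?thesis unfolding e c1 c2 c3 by (simp add: mult.assoc)
qed

lemma cond_ratio:
  assumes "prob_space M" "finite II" "II \<noteq> {}" "disjoint_family_on Bx II"
    "\<And>I. I \<in> II \<Longrightarrow> Bx I \<in> sets M" "\<And>I. I \<in> II \<Longrightarrow> measure M (Bx I) > 0"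
    "\<And>I. I \<in> II \<Longrightarrow> A \<inter> Bx I \<in> sets M"
    "\<And>I. I \<in> II \<Longrightarrow> measure M (A \<inter> Bx I) = c * measure M (Bx I)"
    "B = (\<Union>I\<in>II. Bx I)"
  shows "cond_prob M A B = c"
proof -
  interpret prob_space M by fact
  have mB: "measure M B = (\<Sum>I\<in>II. measure M (Bx I))"
    unfolding assms(9) by (rule finite_measure_finite_Union) (use assms in auto)
  have AB: "A \<inter> B = (\<Union>I\<in>II. A \<inter> Bx I)" using assms(9) by auto
  have "measure M (A \<inter> B) = (\<Sum>I\<in>II. measure M (A \<inter> Bx I))"
    unfolding AB by (rule finite_measure_finite_Union)
      (use assms in \<open>auto simp: disjoint_family_on_def\<close>)
  also have "\<dots> = c * measure M B" unfolding mB sum_distrib_left using assms(8) by simp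
  finally have 1: "measure M (A \<inter> B) = c * measure M B" .
  obtain I0 where "I0 \<in> II" using assms(3) by blast
  have "measure M (Bx I0) \<le> measure M B"
    unfolding mB by (rule member_le_sum) (use assms \<open>I0 \<in> II\<close> in auto)
  then have "measure M B > 0" using assms(6)[OF \<open>I0 \<in> II\<close>] by linarith
  then show ?thesis using 1 by (simp add: cond_prob_def)
qed




definition boxB :: "nat \<Rightarrow> real \<Rightarrow> nat set \<Rightarrow> (nat \<Rightarrow> real) set" where
  "boxB n s I = PiE {..<n} (\<lambda>i. if i \<in> I then {s<..} else {..<s})"

definition box1 :: "nat \<Rightarrow> real \<Rightarrow> real \<Rightarrow> nat set \<Rightarrow> (nat \<Rightarrow> real) set" where
  "box1 n s t I = PiE {..<n} (\<lambda>i. if i \<in> I then {t..} else {..<s})"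

definition box2 :: "nat \<Rightarrow> real \<Rightarrow> real \<Rightarrow> nat set \<Rightarrow> nat set \<Rightarrow> (nat \<Rightarrow> real) set" where
  "box2 n s t I J = PiE {..<n} (\<lambda>i. if i \<in> J then {t<..} else if i \<in> I then {s<..<t} else {..<s})"

lemma card_le_n: "card {i. i < n \<and> P i} \<le> n"
  by (rule order_trans[OF card_mono[of "{..<n}"]]) auto

lemma B_eq:
  assumes "1 \<le> m" "m \<le> n" "0 < s"
  shows "cond_event n m s = (\<Union>I\<in>{I. I \<subseteq> {..<n} \<and> card I = m}. boxB n s I)"
proof (intro equalityI subsetI)
  fix w assume w: "w \<in> cond_event n m s"
  then have ws: "w \<in> space (exp_sample n)" and o1: "ord_stat n w (Suc m) < ereal s"
    and o2: "ereal s < ord_stat n w m" by (auto simp: cond_event_def)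
  let ?G = "{i. i < n \<and> s < w i}" and ?H = "{i. i < n \<and> s \<le> w i}"
  have c1: "card ?H \<le> m"
  proof (cases "Suc m \<le> n")
    case True then show ?thesis using o1 ord_stat_lt[of "Suc m" n w s] by simp
  next
    case False then show ?thesis using card_le_n[of n "\<lambda>i. s \<le> w i"] by simp
  qed
  have c2: "m \<le> card ?G" using o2 ord_stat_gt[OF assms(1,2), of s w] by simp
  have sub: "?G \<subseteq> ?H" by auto
  have fH: "finite ?H" by simp
  have GH: "?G = ?H" by (rule card_seteq[OF fH sub]) (use c1 c2 in linarith)
  have cG: "card ?G = m" using c1 c2 GH by simp
  have "w \<in> boxB n s ?G"
    unfolding boxB_def using ws GH by (auto simp: M_space PiE_iff  set_eq_iff not_le)
  moreover have "?G \<subseteq> {..<n}" by auto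
  ultimately show "w \<in> (\<Union>I\<in>{I. I \<subseteq> {..<n} \<and> card I = m}. boxB n s I)" using cG by blast
next
  fix w assume "w \<in> (\<Union>I\<in>{I. I \<subseteq> {..<n} \<and> card I = m}. boxB n s I)"
  then obtain I where I: "I \<subseteq> {..<n}" "card I = m" and wb: "w \<in> boxB n s I" by auto
  have wi: "\<And>i. i < n \<Longrightarrow> (i \<in> I \<longrightarrow> s < w i) \<and> (i \<notin> I \<longrightarrow> w i < s)"
    using wb unfolding boxB_def by (auto simp: PiE_iff split: if_splits)
  have G: "{i. i < n \<and> s < w i} = I" using wi I by force
  have H: "{i. i < n \<and> s \<le> w i} = I" using wi I by force
  have ws: "w \<in> space (exp_sample n)" using wb unfolding boxB_def by (auto simp: M_space PiE_iff)
  have o1: "ord_stat n w (Suc m) < ereal s"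
  proof (cases "Suc m \<le> n")
    case True then show ?thesis using ord_stat_lt[of "Suc m" n w s] H I by simp
  next
    case False then show ?thesis using assms by (simp add: ord_stat_def)
  qed
  have o2: "ereal s < ord_stat n w m" using ord_stat_gt[OF assms(1,2), of s w] G I by simp
  show "w \<in> cond_event n m s" using ws o1 o2 by (simp add: cond_event_def)
qed

lemma boxB_pt:
  assumes "w \<in> boxB n s I" "I \<subseteq> {..<n}"
  shows "\<And>i. i < n \<Longrightarrow> (i \<in> I \<longrightarrow> s < w i) \<and> (i \<notin> I \<longrightarrow> w i < s)"
    "w \<in> space (exp_sample n)"
  using assms unfolding boxB_def by (auto simp: PiE_iff M_space split: if_splits)

lemma A1_eq:
  assumes "I \<subseteq> {..<n}" "card I = m" "1 \<le> m" "m \<le> n" "s < t"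
  shows "{w \<in> space (exp_sample n). ord_stat n w m < ereal t} \<inter> boxB n s I = boxB n s I - box1 n s t I"
proof (intro equalityI subsetI)
  fix w assume w: "w \<in> {w \<in> space (exp_sample n). ord_stat n w m < ereal t} \<inter> boxB n s I"
  then have wb: "w \<in> boxB n s I" by simp
  note p = boxB_pt[OF wb assms(1)]
  have "card {i. i < n \<and> t \<le> w i} < m" using w ord_stat_lt[OF assms(3,4), of w t] by simp
  then have "{i. i < n \<and> t \<le> w i} \<noteq> I" using assms(2) by auto
  moreover have "{i. i < n \<and> t \<le> w i} \<subseteq> I" using p(1) assms(5) by force
  ultimately obtain i where i: "i \<in> I" "\<not> t \<le> w i" using assms(1) by blast
  then have "w \<notin> box1 n s t I" using assms(1) unfolding box1_def by (auto simp: PiE_iff)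
  then show "w \<in> boxB n s I - box1 n s t I" using wb by simp
next
  fix w assume w: "w \<in> boxB n s I - box1 n s t I"
  then have wb: "w \<in> boxB n s I" by simp
  note p = boxB_pt[OF wb assms(1)]
  have "\<not> (\<forall>i\<in>I. t \<le> w i)"
  proof
    assume a: "\<forall>i\<in>I. t \<le> w i"
    have "w \<in> box1 n s t I" unfolding box1_def using a p wb unfolding boxB_def
      by (auto simp: PiE_iff)
    then show False using w by simp
  qed
  then obtain i where i: "i \<in> I" "w i < t" by auto
  have sub: "{i. i < n \<and> t \<le> w i} \<subseteq> I" using p(1) assms(5) by force
  have "{i. i < n \<and> t \<le> w i} \<subset> I" using sub i by auto
  then have "card {i. i < n \<and> t \<le> w i} < m"
    using assms(1,2) psubset_card_mono[of I] finite_subset[of I "{..<n}"] by auto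
  then have "ord_stat n w m < ereal t" using ord_stat_lt[OF assms(3,4), of w t] by simp
  then show "w \<in> {w \<in> space (exp_sample n). ord_stat n w m < ereal t} \<inter> boxB n s I"
    using wb p(2) by simp
qed

lemma A2_eq:
  assumes "I \<subseteq> {..<n}" "card I = m" "1 \<le> k" "k \<le> m" "m \<le> n" "s < t"
  shows "{w \<in> space (exp_sample n). ord_stat n w (m - k + 1) < ereal t \<and> ereal t < ord_stat n w (m - k)}
     \<inter> boxB n s I = (\<Union>J\<in>{J. J \<subseteq> I \<and> card J = m - k}. box2 n s t I J)"
proof (intro equalityI subsetI)
  fix w assume w: "w \<in> {w \<in> space (exp_sample n). ord_stat n w (m - k + 1) < ereal t \<and> ereal t < ord_stat n w (m - k)}
     \<inter> boxB n s I"
  then have wb: "w \<in> boxB n s I" by simp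
  note p = boxB_pt[OF wb assms(1)]
  let ?G = "{i. i < n \<and> t < w i}" and ?H = "{i. i < n \<and> t \<le> w i}"
  have mk: "m - k + 1 \<le> n" using assms by linarith
  have c1: "card ?H \<le> m - k"
    using w ord_stat_lt[OF _ mk, of w t] by simp
  have c2: "m - k \<le> card ?G"
  proof (cases "m - k = 0")
    case False then show ?thesis using w ord_stat_gt[of "m - k" n t w] assms by simp
  qed simp
  have sub: "?G \<subseteq> ?H" by auto
  have fH: "finite ?H" by simp
  have GH: "?G = ?H" by (rule card_seteq[OF fH sub]) (use c1 c2 in linarith)
  have HI: "?H \<subseteq> I" using p(1) assms(6) by force
  have cG: "card ?H = m - k" using c1 c2 GH by simp
  have "w \<in> box2 n s t I ?H"
    unfolding box2_def using p GH wb unfolding boxB_def by (auto simp: PiE_iff set_eq_iff not_le)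
  then show "w \<in> (\<Union>J\<in>{J. J \<subseteq> I \<and> card J = m - k}. box2 n s t I J)" using cG HI by auto
next
  fix w assume "w \<in> (\<Union>J\<in>{J. J \<subseteq> I \<and> card J = m - k}. box2 n s t I J)"
  then obtain J where J: "J \<subseteq> I" "card J = m - k" and wb2: "w \<in> box2 n s t I J" by auto
  have wi: "\<And>i. i < n \<Longrightarrow> (i \<in> J \<longrightarrow> t < w i) \<and> (i \<notin> J \<and> i \<in> I \<longrightarrow> s < w i \<and> w i < t)
       \<and> (i \<notin> I \<longrightarrow> w i < s)"
  proof -
    fix i assume "i < n"
    then have "w i \<in> (if i \<in> J then {t<..} else if i \<in> I then {s<..<t} else {..<s})"
      using wb2 unfolding box2_def by (auto simp: PiE_iff)
    then show "?thesis i" using J(1) by (cases "i \<in> J"; cases "i \<in> I") auto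
  qed
  have ext: "w \<in> extensional {..<n}" using wb2 unfolding box2_def by (auto simp: PiE_iff)
  have "\<forall>i\<in>{..<n}. w i \<in> (if i \<in> I then {s<..} else {..<s})"
  proof
    fix i assume "i \<in> {..<n}"
    then have "i < n" by simp
    show "w i \<in> (if i \<in> I then {s<..} else {..<s})"
    proof (cases "i \<in> I")
      case True
      have "s < w i"
      proof (cases "i \<in> J")
        case True then show ?thesis using wi[OF \<open>i < n\<close>] assms(6) by simp
      next
        case False then show ?thesis using wi[OF \<open>i < n\<close>] \<open>i \<in> I\<close> by simp
      qed
      then show ?thesis using True by simp
    next
      case False then show ?thesis using wi[OF \<open>i < n\<close>] J(1) by auto
    qed
  qed
  then have wb: "w \<in> boxB n s I" unfolding boxB_def using ext by (simp add: PiE_iff)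
  note p = boxB_pt[OF wb assms(1)]
  have Jn: "\<And>i. i \<in> J \<Longrightarrow> i < n" using J(1) assms(1) by auto
  have nJ: "\<And>i. i < n \<Longrightarrow> i \<notin> J \<Longrightarrow> w i < t"
  proof -
    fix i assume "i < n" "i \<notin> J"
    then show "w i < t" using wi[OF \<open>i < n\<close>] assms(6) by (cases "i \<in> I") auto
  qed
  have G: "{i. i < n \<and> t < w i} = J"
  proof (intro set_eqI iffI)
    fix i assume "i \<in> {i. i < n \<and> t < w i}" then show "i \<in> J" using nJ by force
  next
    fix i assume "i \<in> J" then show "i \<in> {i. i < n \<and> t < w i}" using Jn wi by blast
  qed
  have H: "{i. i < n \<and> t \<le> w i} = J"
  proof (intro set_eqI iffI)
    fix i assume "i \<in> {i. i < n \<and> t \<le> w i}" then show "i \<in> J" using nJ by force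
  next
    fix i assume "i \<in> J" then show "i \<in> {i. i < n \<and> t \<le> w i}" using Jn wi less_imp_le by blast
  qed
  have mk: "m - k + 1 \<le> n" using assms by linarith
  have o1: "ord_stat n w (m - k + 1) < ereal t"
    using ord_stat_lt[OF _ mk, of w t] H J by simp
  have o2: "ereal t < ord_stat n w (m - k)"
  proof (cases "m - k = 0")
    case True then show ?thesis by (simp add: ord_stat_def)
  next
    case False then show ?thesis using ord_stat_gt[of "m - k" n t w] G J assms by simp
  qed
  show "w \<in> {w \<in> space (exp_sample n). ord_stat n w (m - k + 1) < ereal t \<and> ereal t < ord_stat n w (m - k)}
     \<inter> boxB n s I" using o1 o2 p(2) wb by simp
qed




lemma meas_boxB:
  assumes "I \<subseteq> {..<n}" "card I = m" "0 \<le> s"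
  shows "measure (exp_sample n) (boxB n s I) = exp (- s) ^ m * (1 - exp (- s)) ^ (n - m)"
proof -
  have "measure (exp_sample n) (boxB n s I) =
      (\<Prod>i<n. measure EE (if i \<in> I then {s<..} else {..<s}))"
    unfolding boxB_def by (rule box_meas) auto
  also have "\<dots> = (\<Prod>i<n. if i \<in> I then exp (- s) else 1 - exp (- s))"
    by (rule prod.cong) (auto simp: EE_gt EE_lt assms)
  also have "\<dots> = exp (- s) ^ card I * (1 - exp (- s)) ^ (card {..<n} - card I)"
    by (rule prod_if2) (use assms in auto)
  finally show ?thesis using assms by simp
qed

lemma meas_box1:
  assumes "I \<subseteq> {..<n}" "card I = m" "0 \<le> s" "0 \<le> t"
  shows "measure (exp_sample n) (box1 n s t I) = exp (- t) ^ m * (1 - exp (- s)) ^ (n - m)"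
proof -
  have "measure (exp_sample n) (box1 n s t I) =
      (\<Prod>i<n. measure EE (if i \<in> I then {t..} else {..<s}))"
    unfolding box1_def by (rule box_meas) auto
  also have "\<dots> = (\<Prod>i<n. if i \<in> I then exp (- t) else 1 - exp (- s))"
    by (rule prod.cong) (auto simp: EE_ge EE_lt assms)
  also have "\<dots> = exp (- t) ^ card I * (1 - exp (- s)) ^ (card {..<n} - card I)"
    by (rule prod_if2) (use assms in auto)
  finally show ?thesis using assms by simp
qed

lemma meas_box2:
  assumes "I \<subseteq> {..<n}" "card I = m" "J \<subseteq> I" "card J = m - k" "k \<le> m" "0 \<le> s" "s < t"
  shows "measure (exp_sample n) (box2 n s t I J) =
     exp (- t) ^ (m - k) * (exp (- s) - exp (- t)) ^ k * (1 - exp (- s)) ^ (n - m)"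
proof -
  have "measure (exp_sample n) (box2 n s t I J) =
      (\<Prod>i<n. measure EE (if i \<in> J then {t<..} else if i \<in> I then {s<..<t} else {..<s}))"
    unfolding box2_def by (rule box_meas) auto
  also have "\<dots> = (\<Prod>i<n. if i \<in> J then exp (- t) else if i \<in> I then exp (- s) - exp (- t) else 1 - exp (- s))"
    by (rule prod.cong) (use assms in \<open>auto simp: EE_gt EE_lt EE_between\<close>)
  also have "\<dots> = exp (- t) ^ card J * (exp (- s) - exp (- t)) ^ (card I - card J) * (1 - exp (- s)) ^ (card {..<n} - card I)"
    by (rule prod_if3) (use assms in auto)
  also have "card I - card J = k" using assms by simp
  finally show ?thesis using assms by simp
qed

lemma boxB_sets: "boxB n s I \<in> sets (exp_sample n)"
  unfolding boxB_def by (rule box_sets) auto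
lemma box1_sets: "box1 n s t I \<in> sets (exp_sample n)"
  unfolding box1_def by (rule box_sets) auto
lemma box2_sets: "box2 n s t I J \<in> sets (exp_sample n)"
  unfolding box2_def by (rule box_sets) auto

lemma boxB_disj: "disjoint_family_on (boxB n s) {I. I \<subseteq> {..<n} \<and> card I = m}"
unfolding disjoint_family_on_def proof (intro ballI impI)
  fix I1 I2 assume "I1 \<in> {I. I \<subseteq> {..<n} \<and> card I = m}" "I2 \<in> {I. I \<subseteq> {..<n} \<and> card I = m}" "I1 \<noteq> I2"
  then have sub: "I1 \<subseteq> {..<n}" "I2 \<subseteq> {..<n}" and ne: "I1 \<noteq> I2" by auto
  show "boxB n s I1 \<inter> boxB n s I2 = {}"
  proof (rule ccontr)
    assume "boxB n s I1 \<inter> boxB n s I2 \<noteq> {}"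
    then obtain w where w1: "w \<in> boxB n s I1" and w2: "w \<in> boxB n s I2" by blast
    from ne obtain i where "(i \<in> I1 \<and> i \<notin> I2) \<or> (i \<in> I2 \<and> i \<notin> I1)" by blast
    then show False
    proof
      assume i: "i \<in> I1 \<and> i \<notin> I2"
      then have "i < n" using sub by auto
      have "s < w i" using boxB_pt(1)[OF w1 sub(1) \<open>i < n\<close>] i by blast
      moreover have "w i < s" using boxB_pt(1)[OF w2 sub(2) \<open>i < n\<close>] i by blast
      ultimately show False by simp
    next
      assume i: "i \<in> I2 \<and> i \<notin> I1"
      then have "i < n" using sub by auto
      have "s < w i" using boxB_pt(1)[OF w2 sub(2) \<open>i < n\<close>] i by blast
      moreover have "w i < s" using boxB_pt(1)[OF w1 sub(1) \<open>i < n\<close>] i by blast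
      ultimately show False by simp
    qed
  qed
qed

lemma box2_pt:
  assumes "w \<in> box2 n s t I J" "i < n" "i \<in> J"
  shows "t < w i"
proof -
  have "w i \<in> (if i \<in> J then {t<..} else if i \<in> I then {s<..<t} else {..<s})"
    using PiE_mem[OF assms(1)[unfolded box2_def], of i] assms(2) by simp
  then show ?thesis using assms by simp
qed

lemma box2_pt2:
  assumes "w \<in> box2 n s t I J" "i < n" "i \<notin> J" "s < t"
  shows "w i < t"
proof -
  have "w i \<in> (if i \<in> J then {t<..} else if i \<in> I then {s<..<t} else {..<s})"
    using PiE_mem[OF assms(1)[unfolded box2_def], of i] assms(2) by simp
  then show ?thesis using assms by (cases "i \<in> I") auto
qed

lemma box2_disj:
  assumes "I \<subseteq> {..<n}" "s < t"
  shows "disjoint_family_on (box2 n s t I) {J. J \<subseteq> I \<and> card J = m}"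
unfolding disjoint_family_on_def proof (intro ballI impI)
  fix I1 I2 assume "I1 \<in> {J. J \<subseteq> I \<and> card J = m}" "I2 \<in> {J. J \<subseteq> I \<and> card J = m}" "I1 \<noteq> I2"
  then have sub: "I1 \<subseteq> {..<n}" "I2 \<subseteq> {..<n}" and ne: "I1 \<noteq> I2" using assms by auto
  show "box2 n s t I I1 \<inter> box2 n s t I I2 = {}"
  proof (rule ccontr)
    assume "box2 n s t I I1 \<inter> box2 n s t I I2 \<noteq> {}"
    then obtain w where w1: "w \<in> box2 n s t I I1" and w2: "w \<in> box2 n s t I I2" by blast
    from ne obtain i where "(i \<in> I1 \<and> i \<notin> I2) \<or> (i \<in> I2 \<and> i \<notin> I1)" by blast
    then show False
    proof
      assume i: "i \<in> I1 \<and> i \<notin> I2"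
      then have "i < n" using sub by auto
      have "t < w i" by (rule box2_pt[OF w1 \<open>i < n\<close>]) (use i in simp)
      moreover have "w i < t" by (rule box2_pt2[OF w2 \<open>i < n\<close> _ assms(2)]) (use i in simp)
      ultimately show False by simp
    next
      assume i: "i \<in> I2 \<and> i \<notin> I1"
      then have "i < n" using sub by auto
      have "t < w i" by (rule box2_pt[OF w2 \<open>i < n\<close>]) (use i in simp)
      moreover have "w i < t" by (rule box2_pt2[OF w1 \<open>i < n\<close> _ assms(2)]) (use i in simp)
      ultimately show False by simp
    qed
  qed
qed

lemma exp_split: "exp (- t) = exp (- s) * exp (- (t - (s::real)))"
  using exp_add[of "-s" "s - t"] by simp

lemma cp1:
  assumes "1 \<le> m" "m \<le> n" "0 < s" "s < t"
  shows "cond_prob (exp_sample n) {w \<in> space (exp_sample n). ord_stat n w m < ereal t} (cond_event n m s)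
     = 1 - exp (- (t - s)) ^ m"
proof (rule cond_ratio[OF M_prob _ _ boxB_disj])
  show "finite {I. I \<subseteq> {..<n} \<and> card I = m}" by simp
  show "{I. I \<subseteq> {..<n} \<and> card I = m} \<noteq> {}"
  proof -
    have "{..<m} \<in> {I. I \<subseteq> {..<n} \<and> card I = m}" using assms by auto
    then show ?thesis by blast
  qed
  show "cond_event n m s = (\<Union>I\<in>{I. I \<subseteq> {..<n} \<and> card I = m}. boxB n s I)"
    by (rule B_eq) (use assms in auto)
  fix I assume I: "I \<in> {I. I \<subseteq> {..<n} \<and> card I = m}"
  then have I1: "I \<subseteq> {..<n}" "card I = m" by auto
  show "boxB n s I \<in> sets (exp_sample n)" by (rule boxB_sets)
  show "0 < measure (exp_sample n) (boxB n s I)" using meas_boxB[OF I1] assms by simp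
  have eq: "{w \<in> space (exp_sample n). ord_stat n w m < ereal t} \<inter> boxB n s I = boxB n s I - box1 n s t I"
    by (rule A1_eq) (use I1 assms in auto)
  show "{w \<in> space (exp_sample n). ord_stat n w m < ereal t} \<inter> boxB n s I \<in> sets (exp_sample n)"
    unfolding eq by (intro sets.Diff boxB_sets box1_sets)
  interpret prob_space "exp_sample n" by (rule M_prob)
  have subs: "box1 n s t I \<subseteq> boxB n s I" unfolding box1_def boxB_def using assms
    by (intro PiE_mono) auto
  have "measure (exp_sample n) ({w \<in> space (exp_sample n). ord_stat n w m < ereal t} \<inter> boxB n s I)
     = measure (exp_sample n) (boxB n s I) - measure (exp_sample n) (box1 n s t I)"
    unfolding eq by (rule finite_measure_Diff) (use subs boxB_sets box1_sets in auto)
  also have "\<dots> = exp (- s) ^ m * (1 - exp (- s)) ^ (n - m) - exp (- t) ^ m * (1 - exp (- s)) ^ (n - m)"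
    using meas_boxB[OF I1] meas_box1[OF I1] assms by simp
  also have "\<dots> = (1 - exp (- (t - s)) ^ m) * measure (exp_sample n) (boxB n s I)"
    using meas_boxB[OF I1] assms exp_split[of t s] by (simp add: power_mult_distrib algebra_simps)
  finally show "measure (exp_sample n) ({w \<in> space (exp_sample n). ord_stat n w m < ereal t} \<inter> boxB n s I)
     = (1 - exp (- (t - s)) ^ m) * measure (exp_sample n) (boxB n s I)" .
qed

lemma cp2:
  assumes "1 \<le> k" "k \<le> m" "m \<le> n" "0 < s" "s < t"
  shows "cond_prob (exp_sample n) {w \<in> space (exp_sample n). ord_stat n w (m - k + 1) < ereal t \<and> ereal t < ord_stat n w (m - k)} (cond_event n m s)
     = real (m choose k) * exp (- (t - s)) ^ (m - k) * (1 - exp (- (t - s))) ^ k"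
proof (rule cond_ratio[OF M_prob _ _ boxB_disj])
  show "finite {I. I \<subseteq> {..<n} \<and> card I = m}" by simp
  show "{I. I \<subseteq> {..<n} \<and> card I = m} \<noteq> {}"
  proof -
    have "{..<m} \<in> {I. I \<subseteq> {..<n} \<and> card I = m}" using assms by auto
    then show ?thesis by blast
  qed
  show "cond_event n m s = (\<Union>I\<in>{I. I \<subseteq> {..<n} \<and> card I = m}. boxB n s I)"
    by (rule B_eq) (use assms in auto)
  fix I assume I: "I \<in> {I. I \<subseteq> {..<n} \<and> card I = m}"
  then have I1: "I \<subseteq> {..<n}" "card I = m" by auto
  show "boxB n s I \<in> sets (exp_sample n)" by (rule boxB_sets)
  show "0 < measure (exp_sample n) (boxB n s I)" using meas_boxB[OF I1] assms by simp
  let ?JJ = "{J. J \<subseteq> I \<and> card J = m - k}"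
  have eq: "{w \<in> space (exp_sample n). ord_stat n w (m - k + 1) < ereal t \<and> ereal t < ord_stat n w (m - k)}
     \<inter> boxB n s I = (\<Union>J\<in>?JJ. box2 n s t I J)"
    by (rule A2_eq) (use I1 assms in auto)
  have fI: "finite I" using I1 finite_subset by auto
  have fJJ: "finite ?JJ" using fI by simp
  show "{w \<in> space (exp_sample n). ord_stat n w (m - k + 1) < ereal t \<and> ereal t < ord_stat n w (m - k)}
     \<inter> boxB n s I \<in> sets (exp_sample n)"
    unfolding eq by (rule sets.finite_UN[OF fJJ]) (rule box2_sets)
  interpret prob_space "exp_sample n" by (rule M_prob)
  have "measure (exp_sample n) ({w \<in> space (exp_sample n). ord_stat n w (m - k + 1) < ereal t \<and> ereal t < ord_stat n w (m - k)}
     \<inter> boxB n s I) = (\<Sum>J\<in>?JJ. measure (exp_sample n) (box2 n s t I J))"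
    unfolding eq by (rule finite_measure_finite_Union[OF fJJ]) (use box2_sets box2_disj[OF I1(1) assms(5)] in auto)
  also have "\<dots> = (\<Sum>J\<in>?JJ. exp (- t) ^ (m - k) * (exp (- s) - exp (- t)) ^ k * (1 - exp (- s)) ^ (n - m))"
    by (rule sum.cong) (use meas_box2 I1 assms in auto)
  also have "\<dots> = real (card ?JJ) * (exp (- t) ^ (m - k) * (exp (- s) - exp (- t)) ^ k * (1 - exp (- s)) ^ (n - m))"
    by simp
  also have "card ?JJ = m choose k"
    using n_subsets[OF fI, of "m - k"] I1 assms binomial_symmetric[of k m] by simp
  also have "real (m choose k) * (exp (- t) ^ (m - k) * (exp (- s) - exp (- t)) ^ k * (1 - exp (- s)) ^ (n - m))
      = (real (m choose k) * exp (- (t - s)) ^ (m - k) * (1 - exp (- (t - s))) ^ k) * measure (exp_sample n) (boxB n s I)"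
  proof -
    define a where "a = exp (- s)"
    define b where "b = exp (- (t - s))"
    have et: "exp (- t) = a * b" unfolding a_def b_def by (rule exp_split)
    have am: "a ^ m = a ^ (m - k) * a ^ k" using assms by (simp add: power_add[symmetric])
    have d: "a - a * b = a * (1 - b)" by (simp add: algebra_simps)
    have d': "(a - a * b) ^ k = a ^ k * (1 - b) ^ k" unfolding d by (rule power_mult_distrib)
    show ?thesis unfolding meas_boxB[OF I1 less_imp_le[OF assms(4)]] a_def[symmetric] b_def[symmetric] et d' am
      by (simp add: power_mult_distrib algebra_simps)
  qed
  finally show "measure (exp_sample n) ({w \<in> space (exp_sample n). ord_stat n w (m - k + 1) < ereal t \<and> ereal t < ord_stat n w (m - k)}
     \<inter> boxB n s I) = (real (m choose k) * exp (- (t - s)) ^ (m - k) * (1 - exp (- (t - s))) ^ k) * measure (exp_sample n) (boxB n s I)" .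
qed



definition h1 :: "nat \<Rightarrow> real \<Rightarrow> real" where
  "h1 m y = (if 0 < y then 1 - exp (- y) ^ m else 0)"

definition h2 :: "nat \<Rightarrow> nat \<Rightarrow> real \<Rightarrow> real" where
  "h2 m k y = (if 0 < y then real (m choose k) * exp (- y) ^ (m - k) * (1 - exp (- y)) ^ k else 0)"

lemma h1m: "h1 m \<in> borel_measurable borel" unfolding h1_def by measurable
lemma h2m: "h2 m k \<in> borel_measurable borel" unfolding h2_def by measurable
lemma g1m: "(\<lambda>x::real. 1 - (1 - x) powr real m) \<in> borel_measurable borel" by measurable
lemma g2m: "(\<lambda>x::real. real (m choose k) * (x ^ k * (1 - x) ^ (m - k))) \<in> borel_measurable borel" by measurable

lemma pt_common:
  assumes "0 < x" "x < (1::real)"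
  shows "0 < - ln (1 - x)" "exp (- (- ln (1 - x))) = 1 - x"
  using assms by (auto simp: ln_less_zero)

lemma pt1:
  assumes "0 < x" "x < (1::real)"
  shows "h1 m (- ln (1 - x)) = 1 - (1 - x) powr real m \<and> 0 \<le> 1 - (1 - x) powr real m
     \<and> 1 - (1 - x) powr real m \<le> real m * x"
proof -
  have pw: "(1 - x) powr real m = (1 - x) ^ m" using assms by (simp add: powr_realpow)
  have b: "1 + real m * (- x) \<le> (1 + - x) ^ m" by (rule Bernoulli_inequality) (use assms in simp)
  have le1: "(1 - x) ^ m \<le> 1" using assms by (intro power_le_one) auto
  show ?thesis unfolding pw h1_def using pt_common[OF assms] b le1 by simp
qed

lemma pt2:
  assumes "0 < x" "x < (1::real)" "1 \<le> k"
  shows "h2 m k (- ln (1 - x)) = real (m choose k) * (x ^ k * (1 - x) ^ (m - k))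
     \<and> 0 \<le> real (m choose k) * (x ^ k * (1 - x) ^ (m - k))
     \<and> real (m choose k) * (x ^ k * (1 - x) ^ (m - k)) \<le> real (m choose k) * x"
proof -
  have le1: "(1 - x) ^ (m - k) \<le> 1" using assms by (intro power_le_one) auto
  have le2: "x ^ (k - 1) \<le> 1" using assms by (intro power_le_one) auto
  have xk: "x ^ k = x * x ^ (k - 1)" using assms by (cases k) auto
  have "x ^ k * (1 - x) ^ (m - k) \<le> x"
  proof -
    have "x ^ k * (1 - x) ^ (m - k) \<le> x ^ k * 1"
      by (rule mult_left_mono[OF le1]) (use assms in simp)
    also have "\<dots> \<le> x * 1" unfolding xk using mult_left_mono[OF le2, of x] assms by simp
    finally show ?thesis by simp
  qed
  then have bnd: "real (m choose k) * (x ^ k * (1 - x) ^ (m - k)) \<le> real (m choose k) * x"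
    by (rule mult_left_mono) simp
  have nn: "0 \<le> real (m choose k) * (x ^ k * (1 - x) ^ (m - k))" using assms by simp
  show ?thesis unfolding h2_def using pt_common[OF assms(1,2)] bnd nn by (simp add: mult_ac)
qed



lemma no_lt:
  assumes "1 \<le> j" "j \<le> m" "m \<le> n" "t \<le> s" "w \<in> cond_event n m s"
  shows "\<not> ord_stat n w j < ereal t"
proof
  assume a: "ord_stat n w j < ereal t"
  have jn: "j \<le> n" using assms by simp
  have m1: "1 \<le> m" using assms by simp
  have "ereal s < ord_stat n w m" using assms(5) by (simp add: cond_event_def)
  then have c1: "m \<le> card {i. i < n \<and> s < w i}" using ord_stat_gt[OF m1 assms(3)] by simp
  have c2: "card {i. i < n \<and> t \<le> w i} < j" using a ord_stat_lt[OF assms(1) jn] by simp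
  have "card {i. i < n \<and> s < w i} \<le> card {i. i < n \<and> t \<le> w i}"
    by (rule card_mono) (use assms(4) in auto)
  then show False using c1 c2 assms(2) by linarith
qed

lemma f1:
  assumes "1 \<le> m" "m \<le> n" "0 < s"
  shows "cond_prob (exp_sample n) {w \<in> space (exp_sample n). ord_stat n w m < ereal (s + y)} (cond_event n m s) = h1 m y"
proof (cases "0 < y")
  case True
  then show ?thesis using cp1[OF assms, of "s + y"] by (simp add: h1_def)
next
  case False
  have "{w \<in> space (exp_sample n). ord_stat n w m < ereal (s + y)} \<inter> cond_event n m s = {}"
    using no_lt[OF assms(1) order_refl assms(2), of "s + y" s] False by auto
  then show ?thesis using False by (simp add: cond_prob_def h1_def)
qed

lemma f2:
  assumes "1 \<le> k" "k \<le> m" "m \<le> n" "0 < s"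
  shows "cond_prob (exp_sample n) {w \<in> space (exp_sample n). ord_stat n w (m - k + 1) < ereal (s + y) \<and> ereal (s + y) < ord_stat n w (m - k)} (cond_event n m s) = h2 m k y"
proof (cases "0 < y")
  case True
  then show ?thesis using cp2[OF assms, of "s + y"] by (simp add: h2_def)
next
  case False
  have j1: "1 \<le> m - k + 1" "m - k + 1 \<le> m" using assms by auto
  have "{w \<in> space (exp_sample n). ord_stat n w (m - k + 1) < ereal (s + y) \<and> ereal (s + y) < ord_stat n w (m - k)} \<inter> cond_event n m s = {}"
    using no_lt[OF j1 assms(3), of "s + y" s] False by auto
  then show ?thesis using False by (simp add: cond_prob_def h2_def)
qed




lemma int_part:
  fixes \<nu> :: "real measure" and h g :: "real \<Rightarrow> real" and C :: real
  assumes nu: "sets \<nu> = sets borel" and supp: "emeasure \<nu> (UNIV - {0<..<1}) = 0"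
    and fin: "(\<integral>\<^sup>+ x. ennreal x \<partial>\<nu>) < \<infinity>"
    and hm: "h \<in> borel_measurable borel" and gm: "g \<in> borel_measurable borel"
    and pt: "\<And>x. 0 < x \<Longrightarrow> x < 1 \<Longrightarrow> h (- ln (1 - x)) = g x \<and> 0 \<le> g x \<and> g x \<le> C * x"
  shows "(\<integral>\<^sup>+ y. ennreal (h y) \<partial>levy_measure \<nu>) = ennreal (\<integral>x. g x \<partial>\<nu>)"
proof -
  have mc: "\<And>f. f \<in> borel_measurable borel \<Longrightarrow> f \<in> borel_measurable \<nu>"
    by (subst measurable_cong_sets[OF nu refl])
  have lnm: "(\<lambda>x. - ln (1 - x)) \<in> measurable \<nu> borel"
    by (rule mc) measurable
  have AE01: "AE x in \<nu>. 0 < x \<and> x < 1"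
  proof (rule AE_I')
    show "UNIV - {0<..<1} \<in> null_sets \<nu>" using supp nu by (auto simp: null_sets_def)
  qed auto
  have "(\<integral>\<^sup>+ y. ennreal (h y) \<partial>levy_measure \<nu>) = (\<integral>\<^sup>+ x. ennreal (h (- ln (1 - x))) \<partial>\<nu>)"
    unfolding levy_measure_def by (rule nn_integral_distr[OF lnm]) (use hm in simp)
  also have "\<dots> = (\<integral>\<^sup>+ x. ennreal (g x) \<partial>\<nu>)"
    by (rule nn_integral_cong_AE, rule eventually_mono[OF AE01]) (simp add: pt)
  also have "\<dots> = ennreal (\<integral>x. g x \<partial>\<nu>)"
  proof (rule nn_integral_eq_integral)
    have idm: "(\<lambda>x. x) \<in> borel_measurable \<nu>" by (rule mc) simp
    have "(\<integral>\<^sup>+ x. ennreal (norm x) \<partial>\<nu>) = (\<integral>\<^sup>+ x. ennreal x \<partial>\<nu>)"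
      by (rule nn_integral_cong_AE) (use AE01 in \<open>auto elim!: eventually_mono\<close>)
    then have "integrable \<nu> (\<lambda>x. x)" using fin by (intro integrableI_bounded[OF idm]) simp
    then have iC: "integrable \<nu> (\<lambda>x. C * x)" by simp
    show "integrable \<nu> g"
    proof (rule Bochner_Integration.integrable_bound[OF iC])
      show "g \<in> borel_measurable \<nu>" by (rule mc[OF gm])
      show "AE x in \<nu>. norm (g x) \<le> norm (C * x)"
        using AE01 by (rule eventually_mono) (use pt in force)
    qed
    show "AE x in \<nu>. 0 \<le> g x" using AE01 by (rule eventually_mono) (use pt in auto)
  qed
  finally show ?thesis .
qed


theorem lemma1:
  fixes \<nu> :: "real measure" and n m k :: nat and s :: real
  assumes "sets \<nu> = sets borel"
    and "emeasure \<nu> (UNIV - {0<..<1}) = 0"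
    and "(\<integral>\<^sup>+ x. ennreal x \<partial>\<nu>) < \<infinity>"
    and "1 \<le> k" and "k \<le> m" and "m \<le> n"
    and "0 < s"
  shows "jump_rate \<nu> n m s (\<lambda>w y. ord_stat n w m < ereal (s + y))
           = ennreal (Phi \<nu> (real m))
       \<and> jump_rate \<nu> n m s (\<lambda>w y. ord_stat n w (m - k + 1) < ereal (s + y)
                                    \<and> ereal (s + y) < ord_stat n w (m - k))
           = ennreal (varphi \<nu> m k)"
proof
  have m1: "1 \<le> m" using assms by simp
  have "jump_rate \<nu> n m s (\<lambda>w y. ord_stat n w m < ereal (s + y))
      = (\<integral>\<^sup>+ y. ennreal (h1 m y) \<partial>levy_measure \<nu>)"
    unfolding jump_rate_def using f1[OF m1 assms(6,7)] by simp
  also have "\<dots> = ennreal (\<integral>x. 1 - (1 - x) powr real m \<partial>\<nu>)"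
    by (rule int_part[OF assms(1,2,3) h1m g1m pt1])
  finally show "jump_rate \<nu> n m s (\<lambda>w y. ord_stat n w m < ereal (s + y)) = ennreal (Phi \<nu> (real m))"
    by (simp add: Phi_def)
next
  have "jump_rate \<nu> n m s (\<lambda>w y. ord_stat n w (m - k + 1) < ereal (s + y)
                                    \<and> ereal (s + y) < ord_stat n w (m - k))
      = (\<integral>\<^sup>+ y. ennreal (h2 m k y) \<partial>levy_measure \<nu>)"
    unfolding jump_rate_def using f2[OF assms(4,5,6,7)] by simp
  also have "\<dots> = ennreal (\<integral>x. real (m choose k) * (x ^ k * (1 - x) ^ (m - k)) \<partial>\<nu>)"
    by (rule int_part[OF assms(1,2,3) h2m g2m pt2]) (use assms(4) in auto)
  also have "(\<integral>x. real (m choose k) * (x ^ k * (1 - x) ^ (m - k)) \<partial>\<nu>) = varphi \<nu> m k"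
    by (simp add: varphi_def lam_def)
  finally show "jump_rate \<nu> n m s (\<lambda>w y. ord_stat n w (m - k + 1) < ereal (s + y)
                                    \<and> ereal (s + y) < ord_stat n w (m - k))
           = ennreal (varphi \<nu> m k)" .
qed

end
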